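(* Let $K\subset\mathbb{R}^n$ be closed and consider $\Sigma:\ \dot x\in F(x),\ x\in C$, satisfying (SA), such that $F(y)\subset T_K(y)$ for all $y\in\partial K\cap\operatorname{int}(C)$. Let $\phi$ be a solution to $\Sigma$ with $\phi(0)=x\in\partial K$ satisfying property $(\star)$ with some $T>0$. Then $\phi([0,T])\subset K$; in particular $\phi$ does not leave $K$ immediately.
   Context: Standing assumption (SA): $C \subset \mathbb{R}^n$ is closed; $F:\mathbb{R}^n \rightrightarrows \mathbb{R}^n$ has $F(x)$ nonempty, closed and convex for all $x \in C$; $F$ is continuous (upper and lower semicontinuous) and one-sided locally Lipschitz: for every nonempty compact $\mathcal{N} \subset \operatorname{dom} F$ there is $k>0$ with $(x_1-x_2)^\top F(x_1) \subset (x_1-x_2)^\top F(x_2) + k|x_1-x_2|^2\mathbb{B}$ for all $x_1,x_2 \in \mathcal{N}$ ($\mathbb{B}$ the closed unit ball). Solutions: $\phi$ is locally absolutely continuous with values in $C$, $\operatorname{dom}\phi=[0,T]$ ($T\ge0$) or $[0,T)$ ($T\in\mathbb{R}_{\ge0}\cup\{+\infty\}$), and $\dot\phi(t)\in F(\phi(t))$ for a.e. $t\in\operatorname{dom}\phi$. A solution $\phi$ with $\phi(0)=x$ leaves $K$ immediately if there is $T>0$ with $\phi((0,T])\subset C\setminus K$. Property $(\star)$ for a solution $\phi$: there exists $T>0$ with $(0,T]\subset\operatorname{dom}\phi$ such that $\operatorname{Proj}_{\partial K}(\phi(t))\cap\operatorname{int}(C)\neq\emptyset$ for all $t\in(0,T]$,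 where $\operatorname{Proj}_{S}(z)$ denotes the set of points of $S$ at minimal Euclidean distance from $z$. Contingent cone: $T_S(x)=\{v: \exists t_i\to 0^+, \exists v_i\to v,\ x+t_iv_i\in S\}$. *)

theory Defs
  imports "HOL-Analysis.Analysis"
begin

definition abs_cont_on :: "real set \<Rightarrow> (real \<Rightarrow> 'a::real_normed_vector) \<Rightarrow> bool" where
  "abs_cont_on I f \<longleftrightarrow>
     (\<forall>\<epsilon>>0. \<exists>\<delta>>0. \<forall>(n::nat) (a::nat \<Rightarrow> real) b.
        (\<forall>i<n. a i \<le> b i \<and> {a i..b i} \<subseteq> I) \<and>
        (\<forall>i<n. \<forall>j<n. i \<noteq> j \<longrightarrow> b i \<le> a j \<or> b j \<le> a i) \<and>
        (\<Sum>i<n. b i - a i) < \<delta>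
        \<longrightarrow> (\<Sum>i<n. norm (f (b i) - f (a i))) < \<epsilon>)"

definition loc_abs_cont_on :: "real set \<Rightarrow> (real \<Rightarrow> 'a::real_normed_vector) \<Rightarrow> bool" where
  "loc_abs_cont_on D f \<longleftrightarrow> (\<forall>a b. {a..b} \<subseteq> D \<longrightarrow> abs_cont_on {a..b} f)"

definition sv_dom :: "('a \<Rightarrow> 'b set) \<Rightarrow> 'a set" where
  "sv_dom F = {x. F x \<noteq> {}}"

definition usc_on :: "'a::metric_space set \<Rightarrow> ('a \<Rightarrow> 'b::topological_space set) \<Rightarrow> bool" where
  "usc_on C F \<longleftrightarrow> (\<forall>x\<in>C. \<forall>U. open U \<and> F x \<subseteq> U \<longrightarrow>
      (\<exists>\<delta>>0. \<forall>y\<in>C. dist y x < \<delta> \<longrightarrow> F y \<subseteq> U))"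

definition lsc_on :: "'a::metric_space set \<Rightarrow> ('a \<Rightarrow> 'b::topological_space set) \<Rightarrow> bool" where
  "lsc_on C F \<longleftrightarrow> (\<forall>x\<in>C. \<forall>U. open U \<and> F x \<inter> U \<noteq> {} \<longrightarrow>
      (\<exists>\<delta>>0. \<forall>y\<in>C. dist y x < \<delta> \<longrightarrow> F y \<inter> U \<noteq> {}))"

definition one_sided_loc_lipschitz :: "('a::euclidean_space \<Rightarrow> 'a set) \<Rightarrow> bool" where
  "one_sided_loc_lipschitz F \<longleftrightarrow>
     (\<forall>N. N \<noteq> {} \<and> compact N \<and> N \<subseteq> sv_dom F \<longrightarrow>
        (\<exists>k>0. \<forall>x1\<in>N. \<forall>x2\<in>N.
           (\<lambda>v. (x1 - x2) \<bullet> v) ` F x1 \<subseteq>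
             {a + b | a b. a \<in> (\<lambda>v. (x1 - x2) \<bullet> v) ` F x2 \<and> \<bar>b\<bar> \<le> k * (norm (x1 - x2))\<^sup>2}))"

definition standing_assumption :: "'a::euclidean_space set \<Rightarrow> ('a \<Rightarrow> 'a set) \<Rightarrow> bool" where
  "standing_assumption C F \<longleftrightarrow>
     closed C \<and>
     (\<forall>x\<in>C. F x \<noteq> {} \<and> closed (F x) \<and> convex (F x)) \<and>
     usc_on C F \<and> lsc_on C F \<and>
     one_sided_loc_lipschitz F"

definition solution_domain :: "real set \<Rightarrow> bool" where
  "solution_domain D \<longleftrightarrow>
     (\<exists>T\<ge>0. D = {0..T}) \<or> (\<exists>T\<ge>0. D = {0..<T}) \<or> D = {0..}"

definition is_solution :: "'a::euclidean_space set \<Rightarrow> ('a \<Rightarrow> 'a set) \<Rightarrow> real set \<Rightarrow> (real \<Rightarrow> 'a) \<Rightarrow> bool" where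
  "is_solution C F D \<phi> \<longleftrightarrow>
     solution_domain D \<and> loc_abs_cont_on D \<phi> \<and> \<phi> ` D \<subseteq> C \<and>
     (\<exists>Z. Z \<in> null_sets lebesgue \<and>
        (\<forall>t\<in>D - Z. \<exists>v\<in>F (\<phi> t). (\<phi> has_vector_derivative v) (at t within D)))"

definition Proj :: "'a::metric_space set \<Rightarrow> 'a \<Rightarrow> 'a set" where
  "Proj S z = {y\<in>S. \<forall>y'\<in>S. dist z y \<le> dist z y'}"

definition contingent_cone :: "'a::real_normed_vector set \<Rightarrow> 'a \<Rightarrow> 'a set" where
  "contingent_cone S x = {v. \<exists>t u. (\<forall>i. t i > 0) \<and> t \<longlonglongrightarrow> 0 \<and> u \<longlonglongrightarrow> v \<and>
                             (\<forall>i. x + t i *\<^sub>R u i \<in> S)}"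

definition star_property_with :: "'a::euclidean_space set \<Rightarrow> 'a set \<Rightarrow> real set \<Rightarrow> (real \<Rightarrow> 'a) \<Rightarrow> real \<Rightarrow> bool" where
  "star_property_with C K D \<phi> T \<longleftrightarrow>
     T > 0 \<and> {0<..T} \<subseteq> D \<and> (\<forall>t\<in>{0<..T}. Proj (frontier K) (\<phi> t) \<inter> interior C \<noteq> {})"

definition leaves_immediately :: "'a set \<Rightarrow> 'a set \<Rightarrow> real set \<Rightarrow> (real \<Rightarrow> 'a) \<Rightarrow> bool" where
  "leaves_immediately C K D \<phi> \<longleftrightarrow> (\<exists>T>0. {0<..T} \<subseteq> D \<and> \<phi> ` {0<..T} \<subseteq> C - K)"

end

theory Submission
  imports Defs
begin


lemma lengths_le:
  fixes c d :: "nat \<Rightarrow> real"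
  assumes h: "\<forall>i<n. c i \<le> d i \<and> {c i..d i} \<subseteq> U"
    and no: "\<forall>i<n. \<forall>j<n. i \<noteq> j \<longrightarrow> d i \<le> c j \<or> d j \<le> c i"
    and U: "U \<in> lmeasurable"
  shows "(\<Sum>i<n. d i - c i) \<le> measure lebesgue U"
proof -
  have "(\<Sum>i<n. d i - c i) = (\<Sum>i<n. measure lebesgue {c i..d i})"
    using h by (intro sum.cong) auto
  also have "\<dots> = measure lebesgue (\<Union> ((\<lambda>i. {c i..d i}) ` {..<n}))"
  proof (rule measure_negligible_finite_Union_image[symmetric])
    show "pairwise (\<lambda>i j. negligible ({c i..d i} \<inter> {c j..d j})) {..<n}"
    unfolding pairwise_def
    proof (intro ballI impI)
      fix i j assume "i \<in> {..<n}" "j \<in> {..<n}" "i \<noteq> j"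
      then have ij: "i < n" "j < n" "i \<noteq> j" by auto
      have "{c i..d i} \<inter> {c j..d j} \<subseteq> {d i, d j}"
        using no ij by fastforce
      then show "negligible ({c i..d i} \<inter> {c j..d j})"
        by (meson finite.emptyI finite_insert negligible_finite negligible_subset)
    qed
  qed auto
  also have "\<dots> \<le> measure lebesgue U"
    using h U by (intro measure_mono_fmeasurable) auto
  finally show ?thesis .
qed

lemma open_small:
  assumes "Z \<in> null_sets lebesgue" "(e::real) > 0"
  obtains U where "open U" "Z \<subseteq> U" "U \<in> lmeasurable" "measure lebesgue U < e"
proof -
  have Zs: "Z \<in> sets lebesgue" using assms(1) by auto
  obtain T where T: "open T" "Z \<subseteq> T" "(T - Z) \<in> lmeasurable" "emeasure lebesgue (T - Z) < ennreal e"
    using sets_lebesgue_outer_open[OF Zs assms(2)] by blast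
  have eq: "T = (T - Z) \<union> Z" using T(2) by blast
  have Zl: "Z \<in> lmeasurable" using assms(1) fmeasurableI_null_sets by blast
  have Tl: "T \<in> lmeasurable" using T(3) Zl eq by (metis fmeasurable.Un)
  have "measure lebesgue T \<le> measure lebesgue (T - Z) + measure lebesgue Z"
    using eq T(3) Zl by (metis measure_Un_le fmeasurableD)
  moreover have "measure lebesgue Z = 0" using assms(1) by (simp add: measure_eq_0_null_sets)
  moreover have "measure lebesgue (T - Z) < e"
    using T(4) T(3) assms(2) by (simp add: emeasure_eq_measure2 ennreal_less_iff) 
  ultimately show ?thesis using that T Tl by fastforce
qed

definition fam_in :: "real set \<Rightarrow> nat \<Rightarrow> (nat \<Rightarrow> real) \<Rightarrow> (nat \<Rightarrow> real) \<Rightarrow> bool" where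
  "fam_in I n c d \<longleftrightarrow> (\<forall>i<n. c i \<le> d i \<and> {c i..d i} \<subseteq> I) \<and>
      (\<forall>i<n. \<forall>j<n. i \<noteq> j \<longrightarrow> d i \<le> c j \<or> d j \<le> c i)"

lemma fam_in_mono: "fam_in I n c d \<Longrightarrow> I \<subseteq> J \<Longrightarrow> fam_in J n c d"
  unfolding fam_in_def by blast

lemma fam_in_single: "a \<le> b \<Longrightarrow> {a..b} \<subseteq> I \<Longrightarrow> fam_in I 1 (\<lambda>_. a) (\<lambda>_. b)"
  unfolding fam_in_def by auto

lemma fam_in_snoc:
  assumes "fam_in I n c d" "\<forall>i<n. d i \<le> s" "s \<le> s'" "{s..s'} \<subseteq> I"
  shows "fam_in I (Suc n) (c(n := s)) (d(n := s'))"
  using assms unfolding fam_in_def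
  by (auto simp: less_Suc_eq)

lemma growth_eps:
  fixes f :: "real \<Rightarrow> real"
  assumes ab: "a \<le> b" and Z: "Z \<in> null_sets lebesgue"
    and ac: "\<And>\<epsilon>. \<epsilon> > 0 \<Longrightarrow> \<exists>\<delta>>0. \<forall>n c d. fam_in {a..b} n c d \<and>
       (\<Sum>i<n. d i - c i) < \<delta> \<longrightarrow> (\<Sum>i<n. f (d i) - f (c i)) < \<epsilon>"
    and dini: "\<And>t \<epsilon>. t \<in> {a..<b} \<Longrightarrow> t \<notin> Z \<Longrightarrow> \<epsilon> > 0 \<Longrightarrow>
        \<exists>\<eta>>0. \<forall>s. t < s \<and> s < t + \<eta> \<and> s \<le> b \<longrightarrow> f s \<le> f t + \<epsilon> * (s - t)"
    and e: "e > 0"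
  shows "f b \<le> f a + e * (b - a) + e"
proof -
  obtain \<delta> where \<delta>: "\<delta> > 0" and acd0: "\<forall>n c d. fam_in {a..b} n c d \<and>
       (\<Sum>i<n. d i - c i) < \<delta> \<longrightarrow> (\<Sum>i<n. f (d i) - f (c i)) < e"
    using ac[OF e] by blast
  have acd: "(\<Sum>i<n. f (d i) - f (c i)) < e" if "fam_in {a..b} n c d" "(\<Sum>i<n. d i - c i) < \<delta>" for n c d
    using acd0 that by blast
  obtain U where U: "open U" "Z \<subseteq> U" "U \<in> lmeasurable" "measure lebesgue U < \<delta>"
    using open_small[OF Z \<delta>] by blast
  define sm where "sm s = {(\<Sum>i<n. f (d i) - f (c i)) | n c d. fam_in (U \<inter> {a..s}) n c d}" for s
  define V where "V s = Sup (sm s)" for s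
  have smI: "(\<Sum>i<n. f (d i) - f (c i)) \<in> sm s" if "fam_in (U \<inter> {a..s}) n c d" for n c d s
    unfolding sm_def using that by blast
  have zero_in: "0 \<in> sm s" for s
  proof -
    have "fam_in (U \<inter> {a..s}) 0 (\<lambda>_. 0) (\<lambda>_. 0)" unfolding fam_in_def by simp
    from smI[OF this] show ?thesis by simp
  qed
  have sums_lt: "\<sigma> < e" if sig: "\<sigma> \<in> sm s" and sb: "s \<le> b" for \<sigma> s
  proof -
    obtain n c d where ncd: "fam_in (U \<inter> {a..s}) n c d" "\<sigma> = (\<Sum>i<n. f (d i) - f (c i))"
      using sig unfolding sm_def by blast
    have h1: "\<forall>i<n. c i \<le> d i \<and> {c i..d i} \<subseteq> U" "\<forall>i<n. \<forall>j<n. i \<noteq> j \<longrightarrow> d i \<le> c j \<or> d j \<le> c i"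
      using ncd(1) unfolding fam_in_def by auto
    have "(\<Sum>i<n. d i - c i) < \<delta>"
      using lengths_le[OF h1 U(3)] U(4) by linarith
    moreover have "fam_in {a..b} n c d"
      using ncd(1) by (rule fam_in_mono) (use sb in auto)
    ultimately show ?thesis using acd ncd(2) by blast
  qed
  have bdd: "bdd_above (sm s)" if "s \<le> b" for s
    using sums_lt[OF _ that] by (meson bdd_above.I less_imp_le)
  have V0: "0 \<le> V s" if "s \<le> b" for s
    unfolding V_def using zero_in bdd[OF that] by (rule cSup_upper)
  have Ve: "V s \<le> e" if "s \<le> b" for s
    unfolding V_def
  proof (rule cSup_least)
    show "sm s \<noteq> {}" using zero_in by blast
    show "\<sigma> \<le> e" if "\<sigma> \<in> sm s" for \<sigma> using sums_lt[OF that \<open>s \<le> b\<close>] by simp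
  qed
  have Vmono: "V s \<le> V s'" if "s \<le> s'" "s' \<le> b" for s s'
    unfolding V_def
  proof (rule cSup_subset_mono)
    show "sm s \<noteq> {}" using zero_in by blast
    show "bdd_above (sm s')" using bdd[of s'] that by simp
    have "fam_in (U \<inter> {a..s'}) n c d" if "fam_in (U \<inter> {a..s}) n c d" for n c d
      using that by (rule fam_in_mono) (use \<open>s \<le> s'\<close> in auto)
    then show "sm s \<subseteq> sm s'" unfolding sm_def by blast
  qed
  have Vjump: "V s + (f s' - f s) \<le> V s'" if "a \<le> s" "s \<le> s'" "s' \<le> b" "{s..s'} \<subseteq> U" for s s'
  proof -
    have key: "\<sigma> \<le> V s' - (f s' - f s)" if sig: "\<sigma> \<in> sm s" for \<sigma>
    proof -
      obtain n c d where ncd: "fam_in (U \<inter> {a..s}) n c d" "\<sigma> = (\<Sum>i<n. f (d i) - f (c i))"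
        using sig unfolding sm_def by blast
      have n1: "fam_in (U \<inter> {a..s'}) n c d" using ncd(1) by (rule fam_in_mono) (use \<open>s \<le> s'\<close> in auto)
      have n2: "\<forall>i<n. d i \<le> s" using ncd(1) unfolding fam_in_def by fastforce
      have "fam_in (U \<inter> {a..s'}) (Suc n) (c(n := s)) (d(n := s'))"
        by (rule fam_in_snoc[OF n1 n2 \<open>s \<le> s'\<close>]) (use \<open>a \<le> s\<close> \<open>{s..s'} \<subseteq> U\<close> in auto)
      note smI[OF this]
      moreover have "(\<Sum>i<Suc n. f ((d(n := s')) i) - f ((c(n := s)) i)) = \<sigma> + (f s' - f s)"
      proof -
        have "(\<Sum>i<Suc n. f ((d(n := s')) i) - f ((c(n := s)) i)) =
           (\<Sum>i<n. f ((d(n := s')) i) - f ((c(n := s)) i)) + (f s' - f s)"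
          by (simp only: sum.lessThan_Suc fun_upd_same)
        also have "(\<Sum>i<n. f ((d(n := s')) i) - f ((c(n := s)) i)) = (\<Sum>i<n. f (d i) - f (c i))"
          by (intro sum.cong) auto
        finally show ?thesis using ncd(2) by simp
      qed
      ultimately have "\<sigma> + (f s' - f s) \<le> V s'"
        unfolding V_def using bdd[OF \<open>s' \<le> b\<close>] by (metis cSup_upper)
      then show ?thesis by linarith
    qed
    have "V s \<le> V s' - (f s' - f s)"
      unfolding V_def
    proof (rule cSup_least)
      show "sm s \<noteq> {}" using zero_in by blast
      show "\<sigma> \<le> Sup (sm s') - (f s' - f s)" if "\<sigma> \<in> sm s" for \<sigma>
        using key[OF that] unfolding V_def .
    qed
    then show ?thesis by linarith
  qed
  define P where "P s \<longleftrightarrow> f s \<le> f a + e * (s - a) + V s" for s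
  define A where "A = {s\<in>{a..b}. \<forall>s'\<in>{a..s}. P s'}"
  have PA: "P a" unfolding P_def using V0[OF ab] by simp
  have aA: "a \<in> A" unfolding A_def using PA ab by auto
  have Ab: "A \<subseteq> {a..b}" unfolding A_def by auto
  have bddA: "bdd_above A" using Ab by (meson bdd_above_Icc bdd_above_mono)
  define s0 where "s0 = Sup A"
  have s0a: "a \<le> s0" unfolding s0_def using aA bddA by (rule cSup_upper)
  have s0b: "s0 \<le> b" unfolding s0_def using aA Ab by (metis cSup_least atLeastAtMost_iff empty_iff subset_iff)
  have Pbelow: "P s'" if "a \<le> s'" "s' < s0" for s'
  proof -
    have "\<exists>s\<in>A. s' < s" using \<open>s' < s0\<close> unfolding s0_def
      using less_cSup_iff[of A s'] aA bddA by auto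
    then obtain s where "s \<in> A" "s' < s" by blast
    then show ?thesis unfolding A_def using that by auto
  qed
  have Ps0: "P s0"
  proof (cases "s0 = a")
    case True then show ?thesis using PA by simp
  next
    case False
    then have lt: "a < s0" using s0a by simp
    have "f s0 \<le> f a + e * (s0 - a) + V s0 + e'" if e': "e' > 0" for e'
    proof -
      obtain \<delta>' where \<delta>': "\<delta>' > 0" and acd': "\<forall>n c d. fam_in {a..b} n c d \<and>
         (\<Sum>i<n. d i - c i) < \<delta>' \<longrightarrow> (\<Sum>i<n. f (d i) - f (c i)) < e'"
        using ac[OF e'] by blast
      define s where "s = max a (s0 - \<delta>'/2)"
      have s: "a \<le> s" "s < s0" "s0 - s < \<delta>'" using lt \<delta>' unfolding s_def by auto
      have fi: "fam_in {a..b} 1 (\<lambda>_. s) (\<lambda>_. s0)" using s s0b by (intro fam_in_single) auto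
      have "(\<Sum>i<(1::nat). (\<lambda>_. s0) i - (\<lambda>_. s) i) < \<delta>'" using s by simp
      then have "(\<Sum>i<(1::nat). f ((\<lambda>_. s0) i) - f ((\<lambda>_. s) i)) < e'"
        using fi acd' by blast
      then have "f s0 - f s < e'" by simp
      moreover have "P s" using Pbelow s by auto
      moreover have "V s \<le> V s0" using Vmono s s0b by auto
      moreover have "e * (s - a) \<le> e * (s0 - a)" using s e by (intro mult_left_mono) auto
      ultimately show ?thesis unfolding P_def by linarith
    qed
    then show ?thesis unfolding P_def by (rule field_le_epsilon)
  qed
  have s0A: "s0 \<in> A" unfolding A_def
  proof (intro CollectI conjI ballI)
    show "s0 \<in> {a..b}" using s0a s0b by auto
    fix s' assume "s' \<in> {a..s0}"
    then show "P s'" using Pbelow[of s'] Ps0 by (cases "s' = s0") auto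
  qed
  have "s0 = b"
  proof (rule ccontr)
    assume "s0 \<noteq> b"
    then have lt: "s0 < b" using s0b by simp
    obtain s where s: "s0 < s" "s \<le> b" "\<And>s'. s0 < s' \<Longrightarrow> s' \<le> s \<Longrightarrow> P s'"
    proof (cases "s0 \<in> Z")
      case False
      then obtain \<eta> where \<eta>: "\<eta> > 0" "\<forall>s. s0 < s \<and> s < s0 + \<eta> \<and> s \<le> b \<longrightarrow> f s \<le> f s0 + e * (s - s0)"
        using dini[of s0 e] lt s0a e by auto
      define s where "s = min (s0 + \<eta>/2) b"
      show ?thesis
      proof (rule that[of s])
        show "s0 < s" "s \<le> b" using \<eta> lt unfolding s_def by auto
        fix s' assume s': "s0 < s'" "s' \<le> s"
        then have "f s' \<le> f s0 + e * (s' - s0)" using \<eta> unfolding s_def by auto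
        moreover have "V s0 \<le> V s'" using Vmono s' unfolding s_def by auto
        moreover have "e * (s' - a) = e * (s0 - a) + e * (s' - s0)" by (simp add: algebra_simps)
        ultimately show "P s'" using Ps0 unfolding P_def by linarith
      qed
    next
      case True
      then have "s0 \<in> U" using U by auto
      then obtain r where r: "r > 0" "ball s0 r \<subseteq> U" using U(1) open_contains_ball by blast
      define s where "s = min (s0 + r/2) b"
      show ?thesis
      proof (rule that[of s])
        show "s0 < s" "s \<le> b" using r lt unfolding s_def by auto
        fix s' assume s': "s0 < s'" "s' \<le> s"
        have "{s0..s'} \<subseteq> ball s0 r" using s' r unfolding s_def by (auto simp: dist_real_def)
        then have "V s0 + (f s' - f s0) \<le> V s'"
          using Vjump[of s0 s'] s' s0a r unfolding s_def by auto
        moreover have "e * (s0 - a) \<le> e * (s' - a)" using s' e by (intro mult_left_mono) auto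
        ultimately show "P s'" using Ps0 unfolding P_def by linarith
      qed
    qed
    have "s \<in> A" unfolding A_def
    proof (intro CollectI conjI ballI)
      show "s \<in> {a..b}" using s s0a by auto
      fix s' assume "s' \<in> {a..s}"
      then have s'r: "a \<le> s'" "s' \<le> s" by auto
      consider "s' < s0" | "s' = s0" | "s0 < s'" by linarith
      then show "P s'"
      proof cases
        case 1 then show ?thesis using Pbelow s'r by blast
      next
        case 2 then show ?thesis using Ps0 by simp
      next
        case 3 then show ?thesis using s(3) s'r by blast
      qed
    qed
    then have "s \<le> s0" unfolding s0_def using bddA by (rule cSup_upper)
    then show False using s by simp
  qed
  then have "P b" using Ps0 by simp
  then show ?thesis unfolding P_def using Ve[of b] by simp
qed

lemma polar:
  fixes K :: "'a::euclidean_space set"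
  assumes yK: "y \<in> K" and near: "\<forall>k\<in>K. dist z y \<le> dist z k" and w: "w \<in> contingent_cone K y"
  shows "(z - y) \<bullet> w \<le> 0"
proof -
  obtain t u where tu: "\<forall>i. t i > 0" "t \<longlonglongrightarrow> 0" "u \<longlonglongrightarrow> w" "\<forall>i. y + t i *\<^sub>R u i \<in> K"
    using w unfolding contingent_cone_def by blast
  have ineq: "(z - y) \<bullet> u i \<le> t i * (u i \<bullet> u i) / 2" for i
  proof -
    let ?a = "z - y"
    have "dist z y \<le> dist z (y + t i *\<^sub>R u i)" using near tu(4) by blast
    then have "norm ?a \<le> norm (?a - t i *\<^sub>R u i)" by (simp add: dist_norm algebra_simps)
    then have "(norm ?a)^2 \<le> (norm (?a - t i *\<^sub>R u i))^2" by (simp add: power_mono)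
    then have "?a \<bullet> ?a \<le> (?a - t i *\<^sub>R u i) \<bullet> (?a - t i *\<^sub>R u i)"
      by (simp add: power2_norm_eq_inner)
    then have "2 * t i * (?a \<bullet> u i) \<le> t i * (t i * (u i \<bullet> u i))"
      by (simp add: inner_diff_left inner_diff_right inner_commute algebra_simps)
    then have "t i * (2 * (?a \<bullet> u i)) \<le> t i * (t i * (u i \<bullet> u i))" by (simp add: algebra_simps)
    then have "2 * (?a \<bullet> u i) \<le> t i * (u i \<bullet> u i)" using tu(1) mult_le_cancel_left_pos by blast
    then show ?thesis by simp
  qed
  have l1: "(\<lambda>i. (z - y) \<bullet> u i) \<longlonglongrightarrow> (z - y) \<bullet> w" using tu(3) by (intro tendsto_intros)
  have l2: "(\<lambda>i. t i * (u i \<bullet> u i) / 2) \<longlonglongrightarrow> 0 * (w \<bullet> w) / 2" using tu(2,3) by (intro tendsto_intros) auto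
  show ?thesis using LIMSEQ_le[OF l1 l2] ineq by simp
qed

lemma nearest_frontier:
  fixes K :: "'a::euclidean_space set"
  assumes "closed K" "z \<notin> K" "y \<in> Proj (frontier K) z"
  shows "y \<in> K \<and> (\<forall>k\<in>K. dist z y \<le> dist z k)"
proof -
  have yf: "y \<in> frontier K" and ymin: "\<forall>p\<in>frontier K. dist z y \<le> dist z p"
    using assms(3) unfolding Proj_def by auto
  have "y \<in> K" using yf assms(1) frontier_subset_closed by blast
  moreover have "dist z y \<le> dist z k" if "k \<in> K" for k
  proof -
    have "closed_segment z k \<inter> frontier K \<noteq> {}"
      by (rule connected_Int_frontier) (use that assms(2) in auto)
    then obtain p where p: "p \<in> closed_segment z k" "p \<in> frontier K" by blast
    have "dist p z \<le> dist z k" using dist_in_closed_segment[OF p(1)] by blast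
    then show ?thesis using ymin p(2) by (metis dist_commute order_trans)
  qed
  ultimately show ?thesis by blast
qed

lemma abs_cont_continuous:
  assumes "abs_cont_on {a..b} f"
  shows "continuous_on {a..b} f"
  unfolding continuous_on_iff
proof (intro ballI allI impI)
  fix x e assume x: "x \<in> {a..b}" and e: "(0::real) < e"
  obtain \<delta> where \<delta>: "\<delta> > 0" and h: "\<forall>(n::nat) (c::nat \<Rightarrow> real) d.
        (\<forall>i<n. c i \<le> d i \<and> {c i..d i} \<subseteq> {a..b}) \<and>
        (\<forall>i<n. \<forall>j<n. i \<noteq> j \<longrightarrow> d i \<le> c j \<or> d j \<le> c i) \<and>
        (\<Sum>i<n. d i - c i) < \<delta>
        \<longrightarrow> (\<Sum>i<n. norm (f (d i) - f (c i))) < e"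
    using assms e unfolding abs_cont_on_def by blast
  show "\<exists>d>0. \<forall>x'\<in>{a..b}. dist x' x < d \<longrightarrow> dist (f x') (f x) < e"
  proof (intro exI conjI ballI impI)
    show "\<delta> > 0" by fact
    fix x' assume x': "x' \<in> {a..b}" "dist x' x < \<delta>"
    have "(\<Sum>i<(1::nat). norm (f ((\<lambda>_. max x x') i) - f ((\<lambda>_. min x x') i))) < e"
      using h[rule_format, of 1 "\<lambda>_. min x x'" "\<lambda>_. max x x'"] x x' by (auto simp: dist_real_def max_def min_def)
    then show "dist (f x') (f x) < e"
      by (cases "x \<le> x'") (auto simp: dist_norm norm_minus_commute max_def min_def)
  qed
qed


lemma growth:
  fixes f :: "real \<Rightarrow> real"
  assumes ab: "a \<le> b" and Z: "Z \<in> null_sets lebesgue"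
    and ac: "\<And>\<epsilon>. \<epsilon> > 0 \<Longrightarrow> \<exists>\<delta>>0. \<forall>n c d. fam_in {a..b} n c d \<and>
       (\<Sum>i<n. d i - c i) < \<delta> \<longrightarrow> (\<Sum>i<n. f (d i) - f (c i)) < \<epsilon>"
    and dini: "\<And>t \<epsilon>. t \<in> {a..<b} \<Longrightarrow> t \<notin> Z \<Longrightarrow> \<epsilon> > 0 \<Longrightarrow>
        \<exists>\<eta>>0. \<forall>s. t < s \<and> s < t + \<eta> \<and> s \<le> b \<longrightarrow> f s \<le> f t + \<epsilon> * (s - t)"
  shows "f b \<le> f a"
proof (rule field_le_epsilon)
  fix e :: real assume e: "e > 0"
  define e' where "e' = e / (b - a + 1)"
  have e': "e' > 0" using e ab unfolding e'_def by auto
  have h: "f b \<le> f a + e' * (b - a) + e'" by (rule growth_eps[OF ab Z ac dini e'])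
  have "e' * (b - a) + e' = e' * (b - a + 1)" by (simp add: algebra_simps)
  also have "\<dots> = e" unfolding e'_def using ab by simp
  finally show "f b \<le> f a + e" using h by linarith
qed


theorem proposition2:
  fixes C K :: "'a::euclidean_space set" and F :: "'a \<Rightarrow> 'a set"
    and D :: "real set" and \<phi> :: "real \<Rightarrow> 'a" and x :: 'a and T :: real
  assumes "closed K"
    and "standing_assumption C F"
    and "\<forall>y\<in>frontier K \<inter> interior C. F y \<subseteq> contingent_cone K y"
    and "is_solution C F D \<phi>"
    and "\<phi> 0 = x" and "x \<in> frontier K"
    and "star_property_with C K D \<phi> T"
  shows "\<phi> ` {0..T} \<subseteq> K \<and> \<not> leaves_immediately C K D \<phi>"
proof -
  note Kc = assms(1)
  have Cc: "closed C" and Fne: "\<And>z. z \<in> C \<Longrightarrow> F z \<noteq> {}" and osl: "one_sided_loc_lipschitz F"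
    using assms(2) unfolding standing_assumption_def by auto
  have tang: "\<And>y. y \<in> frontier K \<Longrightarrow> y \<in> interior C \<Longrightarrow> F y \<subseteq> contingent_cone K y"
    using assms(3) by blast
  have sd: "solution_domain D" and lac: "loc_abs_cont_on D \<phi>" and phiC: "\<phi> ` D \<subseteq> C"
    using assms(4) unfolding is_solution_def by auto
  obtain Z where Z: "Z \<in> null_sets lebesgue"
    and der: "\<And>t. t \<in> D \<Longrightarrow> t \<notin> Z \<Longrightarrow> \<exists>v\<in>F (\<phi> t). (\<phi> has_vector_derivative v) (at t within D)"
    using assms(4) unfolding is_solution_def by blast
  have T0: "T > 0" and TD: "{0<..T} \<subseteq> D"
    and star: "\<And>t. t \<in> {0<..T} \<Longrightarrow> Proj (frontier K) (\<phi> t) \<inter> interior C \<noteq> {}"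
    using assms(7) unfolding star_property_with_def by auto
  have "T \<in> D" using TD T0 by auto
  then have "0 \<in> D" using sd unfolding solution_domain_def by auto
  then have D0T: "{0..T} \<subseteq> D" using TD by (auto simp: less_eq_real_def)
  have xK: "x \<in> K" using assms(6) Kc frontier_subset_closed by blast
  have Kne: "K \<noteq> {}" using xK by blast
  have acphi: "abs_cont_on {0..T} \<phi>" using lac D0T unfolding loc_abs_cont_on_def by blast
  have cphi: "continuous_on {0..T} \<phi>" by (rule abs_cont_continuous[OF acphi])
  have cimg: "compact (\<phi> ` {0..T})" using cphi by (intro compact_continuous_image) auto
  then obtain B where B: "\<And>t. t \<in> {0..T} \<Longrightarrow> norm (\<phi> t) \<le> B"
    using compact_imp_bounded[OF cimg] unfolding bounded_iff by blast
  define R where "R = B + norm x"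
  have R0: "R \<ge> 0"
  proof -
    have "norm (\<phi> 0) \<le> B" using B T0 by auto
    moreover have "0 \<le> norm (\<phi> 0)" "0 \<le> norm x" by auto
    ultimately show ?thesis unfolding R_def by linarith
  qed
  have idR: "infdist (\<phi> t) K \<le> R" if "t \<in> {0..T}" for t
  proof -
    have "infdist (\<phi> t) K \<le> dist (\<phi> t) x" using xK by (rule infdist_le)
    also have "\<dots> \<le> norm (\<phi> t) + norm x" by (simp add: dist_norm norm_triangle_ineq4)
    finally show ?thesis using B[OF that] unfolding R_def by linarith
  qed
  define Y where "Y = {y. y \<in> interior C \<and> (\<exists>t\<in>{0<..T}. y \<in> Proj (frontier K) (\<phi> t))}"
  have Ybd: "bounded Y"
    unfolding bounded_iff
  proof (intro exI ballI)
    fix y assume "y \<in> Y"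
    then obtain t where t: "t \<in> {0<..T}" "y \<in> Proj (frontier K) (\<phi> t)" unfolding Y_def by blast
    have "dist (\<phi> t) y \<le> dist (\<phi> t) x" using t(2) assms(6) unfolding Proj_def by blast
    moreover have "norm (\<phi> t) \<le> B" using B t(1) by auto
    moreover have "norm y \<le> norm (\<phi> t) + dist (\<phi> t) y"
      by (metis dist_commute dist_norm norm_triangle_sub)
    moreover have "dist (\<phi> t) x \<le> norm (\<phi> t) + norm x" by (simp add: dist_norm norm_triangle_ineq4)
    ultimately show "norm y \<le> 2 * B + norm x" by linarith
  qed
  define N where "N = \<phi> ` {0..T} \<union> closure Y"
  have YC: "Y \<subseteq> C" unfolding Y_def using interior_subset by blast
  have NC: "N \<subseteq> C" unfolding N_def using phiC D0T closure_minimal[OF YC Cc] by blast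
  have Ncomp: "compact N" unfolding N_def using cimg Ybd by (simp add: compact_Un compact_closure)
  have Nne: "N \<noteq> {}" unfolding N_def using T0 by auto
  have Ndom: "N \<subseteq> sv_dom F" using NC Fne unfolding sv_dom_def by blast
  obtain k where k0: "k > 0" and klip: "\<And>x1 x2. x1 \<in> N \<Longrightarrow> x2 \<in> N \<Longrightarrow>
       (\<lambda>v. (x1 - x2) \<bullet> v) ` F x1 \<subseteq>
             {a + b | a b. a \<in> (\<lambda>v. (x1 - x2) \<bullet> v) ` F x2 \<and> \<bar>b\<bar> \<le> k * (norm (x1 - x2))\<^sup>2}"
  proof -
    have "\<exists>k>0. \<forall>x1\<in>N. \<forall>x2\<in>N. (\<lambda>v. (x1 - x2) \<bullet> v) ` F x1 \<subseteq>
             {a + b | a b. a \<in> (\<lambda>v. (x1 - x2) \<bullet> v) ` F x2 \<and> \<bar>b\<bar> \<le> k * (norm (x1 - x2))\<^sup>2}"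
      using osl[unfolded one_sided_loc_lipschitz_def, rule_format, of N] Nne Ncomp Ndom by simp
    then obtain k where "k > 0" and "\<forall>x1\<in>N. \<forall>x2\<in>N. (\<lambda>v. (x1 - x2) \<bullet> v) ` F x1 \<subseteq>
             {a + b | a b. a \<in> (\<lambda>v. (x1 - x2) \<bullet> v) ` F x2 \<and> \<bar>b\<bar> \<le> k * (norm (x1 - x2))\<^sup>2}"
      by (elim exE conjE)
    then show ?thesis using that by simp
  qed
  define L where "L = 2 * k"
  define g where "g t = (infdist (\<phi> t) K)^2" for t
  define f where "f t = exp (- L * t) * g t" for t
  have g0: "g t \<ge> 0" for t unfolding g_def by simp
  have ging: "\<exists>\<eta>>0. \<forall>s. t < s \<and> s < t + \<eta> \<and> s \<le> T \<longrightarrow> g s \<le> g t + (L * g t + \<epsilon>) * (s - t)"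
    if t: "t \<in> {0..<T}" "t \<notin> Z" and eps: "\<epsilon> > 0" for t \<epsilon>
  proof -
    have tD: "t \<in> D" using t D0T by auto
    obtain v where vF: "v \<in> F (\<phi> t)" and dv: "(\<phi> has_vector_derivative v) (at t within D)"
      using der[OF tD t(2)] by blast
    obtain y where yK: "y \<in> K" and gy: "infdist (\<phi> t) K = dist (\<phi> t) y"
      and inn: "(\<phi> t - y) \<bullet> v \<le> k * (dist (\<phi> t) y)^2"
    proof (cases "\<phi> t \<in> K")
      case True
      show ?thesis by (rule that[of "\<phi> t"]) (use True in auto)
    next
      case False
      then have "t \<noteq> 0" using assms(5) xK by auto
      then have t0: "t \<in> {0<..T}" using t by auto
      then obtain y where y: "y \<in> Proj (frontier K) (\<phi> t)" "y \<in> interior C" using star by blast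
      have yK: "y \<in> K" and near: "\<forall>k\<in>K. dist (\<phi> t) y \<le> dist (\<phi> t) k"
        using nearest_frontier[OF Kc False y(1)] by auto
      have gy: "infdist (\<phi> t) K = dist (\<phi> t) y"
      proof -
        obtain y' where "y' \<in> K" "infdist (\<phi> t) K = dist (\<phi> t) y'"
          using infdist_attains_inf[OF Kc Kne] by blast
        then show ?thesis using near infdist_le[OF yK, of "\<phi> t"] by force
      qed
      have yY: "y \<in> Y" unfolding Y_def using y t0 by blast
      have yN: "y \<in> N" unfolding N_def using yY closure_subset by blast
      have ptN: "\<phi> t \<in> N" unfolding N_def using t by auto
      have "(\<phi> t - y) \<bullet> v \<in> {a + b | a b. a \<in> (\<lambda>v. (\<phi> t - y) \<bullet> v) ` F y \<and> \<bar>b\<bar> \<le> k * (norm (\<phi> t - y))\<^sup>2}"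
        using klip[OF ptN yN] vF by blast
      then obtain w b where w: "w \<in> F y" and eq: "(\<phi> t - y) \<bullet> v = (\<phi> t - y) \<bullet> w + b"
        and bb: "\<bar>b\<bar> \<le> k * (norm (\<phi> t - y))\<^sup>2" by blast
      have yfr: "y \<in> frontier K" using y(1) unfolding Proj_def by blast
      have "w \<in> contingent_cone K y" using tang[OF yfr y(2)] w by blast
      then have "(\<phi> t - y) \<bullet> w \<le> 0" using polar[OF yK near] by blast
      then have "(\<phi> t - y) \<bullet> v \<le> k * (dist (\<phi> t) y)^2" using eq bb by (simp add: dist_norm)
      then show ?thesis using that yK gy by blast
    qed
    have dphi: "(\<phi> has_derivative (\<lambda>h. h *\<^sub>R v)) (at t within D)"
      using dv by (simp add: has_vector_derivative_def)
    have d1: "((\<lambda>s. \<phi> s - y) has_derivative (\<lambda>h. h *\<^sub>R v)) (at t within D)"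
      using has_derivative_diff[OF dphi has_derivative_const[of y]] by simp
    have dpsi: "((\<lambda>s. (\<phi> s - y) \<bullet> (\<phi> s - y)) has_derivative
        (\<lambda>h. (\<phi> t - y) \<bullet> (h *\<^sub>R v) + (h *\<^sub>R v) \<bullet> (\<phi> t - y))) (at t within D)"
      by (rule has_derivative_inner[OF d1 d1])
    obtain dd where dd: "dd > 0" and hd: "\<forall>s\<in>D. norm (s - t) < dd \<longrightarrow>
        norm ((\<phi> s - y) \<bullet> (\<phi> s - y) - (\<phi> t - y) \<bullet> (\<phi> t - y) -
          ((\<phi> t - y) \<bullet> ((s - t) *\<^sub>R v) + ((s - t) *\<^sub>R v) \<bullet> (\<phi> t - y))) \<le> \<epsilon> * norm (s - t)"
      using dpsi eps unfolding has_derivative_within_alt by blast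
    show ?thesis
    proof (intro exI conjI allI impI)
      show "dd > 0" by fact
      fix s assume s: "t < s \<and> s < t + dd \<and> s \<le> T"
      have sD: "s \<in> D" using s t TD by auto
      define c where "c = 2 * ((\<phi> t - y) \<bullet> v)"
      have ex: "(\<phi> t - y) \<bullet> ((s - t) *\<^sub>R v) + ((s - t) *\<^sub>R v) \<bullet> (\<phi> t - y) = (s - t) * c"
        unfolding c_def by (simp add: inner_commute algebra_simps)
      have "norm ((\<phi> s - y) \<bullet> (\<phi> s - y) - (\<phi> t - y) \<bullet> (\<phi> t - y) - (s - t) * c) \<le> \<epsilon> * (s - t)"
        using hd sD s ex by auto
      then have psi: "(\<phi> s - y) \<bullet> (\<phi> s - y) \<le> (\<phi> t - y) \<bullet> (\<phi> t - y) + (s - t) * c + \<epsilon> * (s - t)"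
        by (simp add: abs_le_iff)
      have gs: "g s \<le> (\<phi> s - y) \<bullet> (\<phi> s - y)"
      proof -
        have "infdist (\<phi> s) K \<le> norm (\<phi> s - y)" using infdist_le[OF yK] by (simp add: dist_norm)
        then have "g s \<le> (norm (\<phi> s - y))^2" unfolding g_def
          by (intro power_mono) (auto simp: infdist_nonneg)
        then show ?thesis by (simp add: power2_norm_eq_inner)
      qed
      have gt: "g t = (\<phi> t - y) \<bullet> (\<phi> t - y)"
        unfolding g_def gy by (simp add: dist_norm power2_norm_eq_inner)
      have "c \<le> L * g t" unfolding c_def L_def g_def gy using inn by simp
      then have "(s - t) * c \<le> (s - t) * (L * g t)" using s by (intro mult_left_mono) auto
      moreover have "g t + (L * g t + \<epsilon>) * (s - t) = g t + (s - t) * (L * g t) + \<epsilon> * (s - t)"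
        by (simp add: algebra_simps)
      ultimately show "g s \<le> g t + (L * g t + \<epsilon>) * (s - t)"
        using gs gt psi by linarith
    qed
  qed
  have fing: "\<exists>\<eta>>0. \<forall>s. t < s \<and> s < t + \<eta> \<and> s \<le> b \<longrightarrow> f s \<le> f t + \<epsilon> * (s - t)"
    if b: "b \<le> T" and t: "t \<in> {0..<b}" "t \<notin> Z" and eps: "\<epsilon> > 0" for b t \<epsilon>
  proof -
    obtain \<eta> where \<eta>: "\<eta> > 0" and h: "\<And>s. t < s \<Longrightarrow> s < t + \<eta> \<Longrightarrow> s \<le> T \<Longrightarrow> g s \<le> g t + (L * g t + \<epsilon>) * (s - t)"
      using ging[of t \<epsilon>] t b eps by auto
    show ?thesis
    proof (intro exI conjI allI impI)
      show "\<eta> > 0" by fact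
      fix s assume s: "t < s \<and> s < t + \<eta> \<and> s \<le> b"
      have L0: "L > 0" unfolding L_def using k0 by simp
      have t0: "t \<ge> 0" using t by simp
      have gs: "g s \<le> g t + (L * g t + \<epsilon>) * (s - t)" using h s b by auto
      have "f s \<le> exp (- L * s) * (g t + (L * g t + \<epsilon>) * (s - t))"
        unfolding f_def by (rule mult_left_mono[OF gs]) simp
      also have "\<dots> = g t * (exp (- L * s) * (1 + L * (s - t))) + \<epsilon> * (exp (- L * s) * (s - t))"
        by (simp add: algebra_simps)
      also have "\<dots> \<le> g t * exp (- L * t) + \<epsilon> * (s - t)"
      proof (rule add_mono)
        have "exp (- L * s) * (1 + L * (s - t)) \<le> exp (- L * s) * exp (L * (s - t))"
          by (rule mult_left_mono) (simp_all add: exp_ge_add_one_self)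
        also have "\<dots> = exp (- L * t)" by (simp add: exp_add[symmetric] algebra_simps)
        finally show "g t * (exp (- L * s) * (1 + L * (s - t))) \<le> g t * exp (- L * t)"
          by (rule mult_left_mono) (rule g0)
        have "exp (- L * s) \<le> 1" using L0 s t0 by simp
        then have "exp (- L * s) * (s - t) \<le> 1 * (s - t)" using s by (intro mult_right_mono) auto
        then show "\<epsilon> * (exp (- L * s) * (s - t)) \<le> \<epsilon> * (s - t)" using eps
          by (intro mult_left_mono) auto
      qed
      also have "\<dots> = f t + \<epsilon> * (s - t)" unfolding f_def by simp
      finally show "f s \<le> f t + \<epsilon> * (s - t)" .
    qed
  qed
  have fac: "\<exists>\<delta>>0. \<forall>n c d. fam_in {0..b} n c d \<and>
       (\<Sum>i<n. d i - c i) < \<delta> \<longrightarrow> (\<Sum>i<n. f (d i) - f (c i)) < \<epsilon>"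
    if b: "b \<le> T" and eps: "\<epsilon> > 0" for b \<epsilon>
  proof -
    have L0: "L > 0" unfolding L_def using k0 by simp
    have tm: "f d - f c \<le> 2 * R * norm (\<phi> d - \<phi> c)" if cd: "0 \<le> c" "c \<le> d" "d \<le> T" for c d
    proof -
      define p where "p = infdist (\<phi> d) K"
      define q where "q = infdist (\<phi> c) K"
      have p: "0 \<le> p" "p \<le> R" unfolding p_def using idR[of d] cd by (auto simp: infdist_nonneg)
      have q: "0 \<le> q" "q \<le> R" unfolding q_def using idR[of c] cd by (auto simp: infdist_nonneg)
      have pq: "\<bar>p - q\<bar> \<le> norm (\<phi> d - \<phi> c)"
        using infdist_triangle[of "\<phi> d" K "\<phi> c"] infdist_triangle[of "\<phi> c" K "\<phi> d"]
        unfolding p_def q_def by (auto simp: dist_norm norm_minus_commute)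
      have ec: "exp (- L * d) \<le> exp (- L * c)" using L0 cd by simp
      have ec1: "exp (- L * c) \<le> 1" using L0 cd by simp
      have "f d - f c = exp (- L * d) * p^2 - exp (- L * c) * q^2" unfolding f_def g_def p_def q_def by simp
      also have "\<dots> \<le> exp (- L * c) * p^2 - exp (- L * c) * q^2"
        using ec by (simp add: mult_right_mono)
      also have "\<dots> = exp (- L * c) * (p^2 - q^2)" by (simp add: algebra_simps)
      also have "\<dots> \<le> \<bar>p^2 - q^2\<bar>"
      proof -
        have "exp (- L * c) * (p^2 - q^2) \<le> exp (- L * c) * \<bar>p^2 - q^2\<bar>"
          by (rule mult_left_mono) auto
        also have "\<dots> \<le> 1 * \<bar>p^2 - q^2\<bar>" using ec1 by (rule mult_right_mono) auto
        finally show ?thesis by simp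
      qed
      also have "\<dots> = \<bar>p - q\<bar> * (p + q)" 
      proof -
        have "p^2 - q^2 = (p - q) * (p + q)" by (simp add: power2_eq_square algebra_simps)
        then show ?thesis using p q by (simp add: abs_mult)
      qed
      also have "\<dots> \<le> norm (\<phi> d - \<phi> c) * (2 * R)"
        using pq p q by (intro mult_mono) auto
      finally show ?thesis by (simp add: algebra_simps)
    qed
    have e2: "\<epsilon> / (2 * R + 1) > 0" using eps R0 by simp
    obtain \<delta> where \<delta>: "\<delta> > 0" and h: "\<forall>(n::nat) (c::nat \<Rightarrow> real) d.
        (\<forall>i<n. c i \<le> d i \<and> {c i..d i} \<subseteq> {0..T}) \<and>
        (\<forall>i<n. \<forall>j<n. i \<noteq> j \<longrightarrow> d i \<le> c j \<or> d j \<le> c i) \<and>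
        (\<Sum>i<n. d i - c i) < \<delta>
        \<longrightarrow> (\<Sum>i<n. norm (\<phi> (d i) - \<phi> (c i))) < \<epsilon> / (2 * R + 1)"
      using acphi e2 unfolding abs_cont_on_def by blast
    show ?thesis
    proof (intro exI conjI allI impI)
      show "\<delta> > 0" by fact
      fix n c d assume ncd: "fam_in {0..b} n c d \<and> (\<Sum>i<n. d i - c i) < \<delta>"
      have fT: "fam_in {0..T} n c d" using fam_in_mono[of "{0..b}" n c d "{0..T}"] ncd b by auto
      then have h1: "\<forall>i<n. c i \<le> d i \<and> {c i..d i} \<subseteq> {0..T}"
        "\<forall>i<n. \<forall>j<n. i \<noteq> j \<longrightarrow> d i \<le> c j \<or> d j \<le> c i" unfolding fam_in_def by auto
      have sn: "(\<Sum>i<n. norm (\<phi> (d i) - \<phi> (c i))) < \<epsilon> / (2 * R + 1)"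
        using h[rule_format, of n c d] h1 ncd by fast
      have "(\<Sum>i<n. f (d i) - f (c i)) \<le> (\<Sum>i<n. 2 * R * norm (\<phi> (d i) - \<phi> (c i)))"
      proof (rule sum_mono)
        fix i assume "i \<in> {..<n}"
        then have "c i \<le> d i" "{c i..d i} \<subseteq> {0..T}" using h1 by auto
        then show "f (d i) - f (c i) \<le> 2 * R * norm (\<phi> (d i) - \<phi> (c i))"
          by (intro tm) auto
      qed
      also have "\<dots> = 2 * R * (\<Sum>i<n. norm (\<phi> (d i) - \<phi> (c i)))" by (simp add: sum_distrib_left)
      also have "\<dots> \<le> (2 * R + 1) * (\<Sum>i<n. norm (\<phi> (d i) - \<phi> (c i)))"
        by (rule mult_right_mono) (auto intro: sum_nonneg)
      also have "\<dots> < (2 * R + 1) * (\<epsilon> / (2 * R + 1))"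
        using sn R0 by (intro mult_strict_left_mono) auto
      also have "\<dots> = \<epsilon>" using R0 by simp
      finally show "(\<Sum>i<n. f (d i) - f (c i)) < \<epsilon>" .
    qed
  qed
  have inK: "\<phi> b \<in> K" if b: "b \<in> {0..T}" for b
  proof -
    have "f b \<le> f 0"
      by (rule growth[OF _ Z]) (use b fac fing in auto)
    moreover have "f 0 = 0" unfolding f_def g_def using assms(5) xK by simp
    ultimately have "exp (- L * b) * g b \<le> 0" unfolding f_def by simp
    then have "g b \<le> 0" by (simp add: mult_le_0_iff)
    then have "infdist (\<phi> b) K = 0" unfolding g_def by simp
    then show ?thesis using in_closed_iff_infdist_zero[OF Kc Kne] by blast
  qed
  show ?thesis
  proof
    show "\<phi> ` {0..T} \<subseteq> K" using inK by blast
    show "\<not> leaves_immediately C K D \<phi>"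
    proof
      assume "leaves_immediately C K D \<phi>"
      then obtain T' where T': "T' > 0" "\<phi> ` {0<..T'} \<subseteq> C - K"
        unfolding leaves_immediately_def by blast
      have "min T T' \<in> {0<..T'}" using T0 T' by auto
      then have "\<phi> (min T T') \<notin> K" using T' by blast
      moreover have "min T T' \<in> {0..T}" using T0 T' by auto
      ultimately show False using inK by blast
    qed
  qed
qed
end
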